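(* Let $\mathcal{G}$ be a MAG with vertices $[n]=\{1,\dots,n\}$ numbered in a topological order. For each $i$, let $\tilde{\mathbb{L}}_i$ consist of (a) the independence $i\perp [i-1]\setminus\mathrm{mb}(i,[i])\mid \mathrm{mb}(i,[i])$, and (b) for every head $H'$ with maximal element $i$ other than the maximal head $\mathrm{barren}_{\mathcal{G}_{[i]}}(\mathrm{dis}_{[i]}(i))$, the independence associated with the edge $H^*\to^{k}H'$, where $k=\min\mathrm{ceil}(\mathrm{ham}(H'))$ and $H^*$ is the maximum, in the partial order on heads, of the set of parent heads $H$ of $H'$ in the complete power DAG with $H\to^{k}H'$. Then the collection $\tilde{\mathbb{L}}=\bigcup_i\tilde{\mathbb{L}}_i$ is equivalent to the collection of independences given by the ordered local Markov property for $\mathcal{G}$ (each collection can be derived from the other using the semi-graphoid axioms).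
   Context: A MAG is an acyclic directed mixed graph (directed and bidirected edges, no directed cycles) with $\mathrm{sib}(v)\cap\mathrm{an}(v)=\emptyset$ for all $v$ and in which every nonadjacent pair is m-separated by some set. $[i]=\{1,\dots,i\}$; the numbering is topological (ancestors have smaller labels). For $W\subseteq V$, $\mathcal{G}_W$ is the induced subgraph and $\mathrm{dis}_W(v)$ the district (bidirected-connected component) of $v$ in $\mathcal{G}_W$. A set $A$ is ancestral if $\mathrm{an}(A)=A$; for ancestral $A$ and $v\in A$ with no child in $A$, the Markov blanket is $\mathrm{mb}(v,A)=\bigl(\mathrm{pa}_{\mathcal{G}_A}(\mathrm{dis}_A(v))\cup\mathrm{dis}_A(v)\bigr)\setminus\{v\}$. The ordered local Markov property is the collection of independences $v\perp A\setminus(\mathrm{mb}(v,A)\cup\{v\})\mid\mathrm{mb}(v,A)$ for all ancestral $A$ and all $v\in A$ with no child in $A$. $\mathrm{barren}_{\mathcal{G}'}(W)=\{w\in W:\mathrm{de}_{\mathcal{G}'}(w)\cap W=\{w\}\}$; a nonempty $H$ is a head if $\mathrm{barren}(H)=H$ and $H$ lies in one district of $\mathcal{G}_{\mathrm{an}(H)}$; $\mathrm{tail}(H)=(\mathrm{dis}_{\mathrm{an}(H)}(H)\setminus H)\cup\mathrm{pa}(\mathrm{dis}_{\mathrm{an}(H)}(H))$. For a head $H$ with maximal element $i$ and $\emptyset\ne K\subseteq H\setminus\{i\}$, write $H\to^K H'$ if $H'=\mathrm{barren}_{\mathcal{G}'}(\mathrm{dis}_{\mathcal{G}'}(i))$ with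 $\mathcal{G}'=\mathcal{G}_{\mathrm{an}(H)\setminus K}$ ($H'$ is again a head with maximal element $i$); the independence associated with it is $i\perp (H\cup T)\setminus(H'\cup T'\cup K)\mid (H'\cup T')\setminus\{i\}$ with $T=\mathrm{tail}(H)$, $T'=\mathrm{tail}(H')$. The complete power DAG for $i$ has as nodes the heads with maximal element $i$, and $H$ is a parent head of $H'$ if $H\to^{\{k\}}H'$ for some single vertex $k\in H\setminus\{i\}$ (written $H\to^k H'$). Heads with the same maximal element are partially ordered by $H\le H''$ iff $\mathrm{an}(H)\subseteq\mathrm{an}(H'')$. $\mathrm{ceil}(W)=\{w\in W:W\cap\mathrm{an}(w)=\{w\}\}$ and $\mathrm{ham}(H)=\mathrm{sib}(\mathrm{dis}_{\mathrm{an}(H)}(H))\setminus\mathrm{dis}_{\mathrm{an}(H)}(H)$. (The paper asserts that the maximum $H^*$ exists.) Semi-graphoid axioms: symmetry; decomposition $X\perp YW|Z\Rightarrow X\perp Y|Z$; weak union $X\perp YW|Z\Rightarrow X\perp W|YZ$; contraction $X\perp Y|Z\ \&\ X\perp W|YZ\Rightarrow X\perp YW|Z$. *)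

theory Defs
  imports Main
begin

text \<open>A mixed graph on vertex set {1..n} is given by a set D of directed edges
(a,b) meaning a \<rightarrow> b, and a symmetric set B of bidirected edges (a,b) meaning a \<leftrightarrow> b.
An independence statement X \<perp> Y | Z is a triple (X, Y, Z) of vertex sets.\<close>

type_synonym indep = "nat set \<times> nat set \<times> nat set"

definition adj :: "(nat \<times> nat) set \<Rightarrow> (nat \<times> nat) set \<Rightarrow> nat \<Rightarrow> nat \<Rightarrow> bool" where
  "adj D B a b \<longleftrightarrow> (a, b) \<in> D \<or> (b, a) \<in> D \<or> (a, b) \<in> B"

definition arrowhead :: "(nat \<times> nat) set \<Rightarrow> (nat \<times> nat) set \<Rightarrow> nat \<Rightarrow> nat \<Rightarrow> bool" where
  "arrowhead D B a b \<longleftrightarrow> (a, b) \<in> D \<or> (a, b) \<in> B"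

definition anc_in :: "(nat \<times> nat) set \<Rightarrow> nat set \<Rightarrow> nat set \<Rightarrow> nat set" where
  "anc_in D W S = {u \<in> W. \<exists>v \<in> S. (u, v) \<in> (D \<inter> (W \<times> W))\<^sup>*}"

definition an :: "(nat \<times> nat) set \<Rightarrow> nat set \<Rightarrow> nat set" where
  "an D S = {u. \<exists>v \<in> S. (u, v) \<in> D\<^sup>*}"

definition desc_in :: "(nat \<times> nat) set \<Rightarrow> nat set \<Rightarrow> nat \<Rightarrow> nat set" where
  "desc_in D W w = {u \<in> W. (w, u) \<in> (D \<inter> (W \<times> W))\<^sup>*}"

definition pa_in :: "(nat \<times> nat) set \<Rightarrow> nat set \<Rightarrow> nat set \<Rightarrow> nat set" where
  "pa_in D W S = {u \<in> W. \<exists>v \<in> S \<inter> W. (u, v) \<in> D}"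

definition pa :: "(nat \<times> nat) set \<Rightarrow> nat set \<Rightarrow> nat set" where
  "pa D S = {u. \<exists>v \<in> S. (u, v) \<in> D}"

definition sib :: "(nat \<times> nat) set \<Rightarrow> nat set \<Rightarrow> nat set" where
  "sib B S = {u. \<exists>v \<in> S. (u, v) \<in> B}"

definition dis_in :: "(nat \<times> nat) set \<Rightarrow> nat set \<Rightarrow> nat \<Rightarrow> nat set" where
  "dis_in B W v = {u \<in> W. (v, u) \<in> (B \<inter> (W \<times> W))\<^sup>*}"

definition dis_set :: "(nat \<times> nat) set \<Rightarrow> nat set \<Rightarrow> nat set \<Rightarrow> nat set" where
  "dis_set B W S = (\<Union>v \<in> S. dis_in B W v)"

definition barren_in :: "(nat \<times> nat) set \<Rightarrow> nat set \<Rightarrow> nat set \<Rightarrow> nat set" where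
  "barren_in D W S = {w \<in> S. desc_in D W w \<inter> S = {w}}"

definition m_connecting :: "(nat \<times> nat) set \<Rightarrow> (nat \<times> nat) set \<Rightarrow> nat set \<Rightarrow> nat list \<Rightarrow> bool" where
  "m_connecting D B Z xs \<longleftrightarrow>
     2 \<le> length xs \<and> distinct xs \<and>
     (\<forall>j. Suc j < length xs \<longrightarrow> adj D B (xs ! j) (xs ! Suc j)) \<and>
     (\<forall>j. 0 < j \<and> Suc j < length xs \<longrightarrow>
        (if arrowhead D B (xs ! (j - 1)) (xs ! j) \<and> arrowhead D B (xs ! Suc j) (xs ! j)
         then xs ! j \<in> an D Z else xs ! j \<notin> Z))"

definition m_separated :: "(nat \<times> nat) set \<Rightarrow> (nat \<times> nat) set \<Rightarrow> nat \<Rightarrow> nat \<Rightarrow> nat set \<Rightarrow> bool" where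
  "m_separated D B a b Z \<longleftrightarrow> a \<notin> Z \<and> b \<notin> Z \<and>
     \<not> (\<exists>xs. hd xs = a \<and> last xs = b \<and> m_connecting D B Z xs)"

definition is_MAG :: "nat \<Rightarrow> (nat \<times> nat) set \<Rightarrow> (nat \<times> nat) set \<Rightarrow> bool" where
  "is_MAG n D B \<longleftrightarrow>
     D \<subseteq> {1..n} \<times> {1..n} \<and> B \<subseteq> {1..n} \<times> {1..n} \<and> sym B \<and>
     acyclic D \<and>
     (\<forall>v. sib B {v} \<inter> an D {v} = {}) \<and>
     (\<forall>a \<in> {1..n}. \<forall>b \<in> {1..n}. a \<noteq> b \<and> \<not> adj D B a b \<longrightarrow>
        (\<exists>Z \<subseteq> {1..n}. m_separated D B a b Z))"

definition topological :: "(nat \<times> nat) set \<Rightarrow> bool" where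
  "topological D \<longleftrightarrow> (\<forall>a b. (a, b) \<in> D \<longrightarrow> a < b)"

definition is_head :: "nat \<Rightarrow> (nat \<times> nat) set \<Rightarrow> (nat \<times> nat) set \<Rightarrow> nat set \<Rightarrow> bool" where
  "is_head n D B H \<longleftrightarrow> H \<noteq> {} \<and> H \<subseteq> {1..n} \<and> barren_in D {1..n} H = H \<and>
     (\<exists>v \<in> H. H \<subseteq> dis_in B (an D H) v)"

definition head_dis :: "(nat \<times> nat) set \<Rightarrow> (nat \<times> nat) set \<Rightarrow> nat set \<Rightarrow> nat set" where
  "head_dis D B H = dis_set B (an D H) H"

definition tail :: "(nat \<times> nat) set \<Rightarrow> (nat \<times> nat) set \<Rightarrow> nat set \<Rightarrow> nat set" where
  "tail D B H = (head_dis D B H - H) \<union> pa D (head_dis D B H)"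

definition head_step :: "(nat \<times> nat) set \<Rightarrow> (nat \<times> nat) set \<Rightarrow> nat set \<Rightarrow> nat set \<Rightarrow> nat set \<Rightarrow> bool" where
  "head_step D B H K H' \<longleftrightarrow>
     K \<noteq> {} \<and> K \<subseteq> H - {Max H} \<and>
     H' = barren_in D (an D H - K) (dis_in B (an D H - K) (Max H))"

definition assoc_indep :: "(nat \<times> nat) set \<Rightarrow> (nat \<times> nat) set \<Rightarrow> nat set \<Rightarrow> nat set \<Rightarrow> nat set \<Rightarrow> indep" where
  "assoc_indep D B H K H' =
     ({Max H}, (H \<union> tail D B H) - (H' \<union> tail D B H' \<union> K), (H' \<union> tail D B H') - {Max H})"

definition power_parent :: "nat \<Rightarrow> (nat \<times> nat) set \<Rightarrow> (nat \<times> nat) set \<Rightarrow> nat set \<Rightarrow> nat \<Rightarrow> nat set \<Rightarrow> bool" where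
  "power_parent n D B H k H' \<longleftrightarrow> is_head n D B H \<and> is_head n D B H' \<and>
     Max H' = Max H \<and> head_step D B H {k} H'"

definition ceil :: "(nat \<times> nat) set \<Rightarrow> nat set \<Rightarrow> nat set" where
  "ceil D W = {w \<in> W. W \<inter> an D {w} = {w}}"

definition ham :: "(nat \<times> nat) set \<Rightarrow> (nat \<times> nat) set \<Rightarrow> nat set \<Rightarrow> nat set" where
  "ham D B H = sib B (head_dis D B H) - head_dis D B H"

definition mb :: "(nat \<times> nat) set \<Rightarrow> (nat \<times> nat) set \<Rightarrow> nat \<Rightarrow> nat set \<Rightarrow> nat set" where
  "mb D B v A = (pa_in D A (dis_in B A v) \<union> dis_in B A v) - {v}"

definition ordered_local_markov :: "nat \<Rightarrow> (nat \<times> nat) set \<Rightarrow> (nat \<times> nat) set \<Rightarrow> indep set" where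
  "ordered_local_markov n D B =
     {({v}, A - (mb D B v A \<union> {v}), mb D B v A) | A v.
        A \<subseteq> {1..n} \<and> an D A = A \<and> v \<in> A \<and> (\<forall>c \<in> A. (v, c) \<notin> D)}"

definition L_tilde_i :: "nat \<Rightarrow> (nat \<times> nat) set \<Rightarrow> (nat \<times> nat) set \<Rightarrow> nat \<Rightarrow> indep set" where
  "L_tilde_i n D B i =
     {({i}, {1..i-1} - mb D B i {1..i}, mb D B i {1..i})} \<union>
     {assoc_indep D B Hs {k} H' | H' Hs k.
        is_head n D B H' \<and> Max H' = i \<and>
        H' \<noteq> barren_in D {1..i} (dis_in B {1..i} i) \<and>
        k \<in> ceil D (ham D B H') \<and> (\<forall>x \<in> ceil D (ham D B H'). k \<le> x) \<and>
        power_parent n D B Hs k H' \<and>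
        (\<forall>H. power_parent n D B H k H' \<longrightarrow> an D H \<subseteq> an D Hs)}"

definition L_tilde :: "nat \<Rightarrow> (nat \<times> nat) set \<Rightarrow> (nat \<times> nat) set \<Rightarrow> indep set" where
  "L_tilde n D B = (\<Union>i \<in> {1..n}. L_tilde_i n D B i)"

inductive sg_derivable :: "indep set \<Rightarrow> indep \<Rightarrow> bool" for S :: "indep set" where
  base: "t \<in> S \<Longrightarrow> sg_derivable S t"
| symmetry: "sg_derivable S (X, Y, Z) \<Longrightarrow> sg_derivable S (Y, X, Z)"
| decomposition: "sg_derivable S (X, Y \<union> W, Z) \<Longrightarrow> sg_derivable S (X, Y, Z)"
| weak_union: "sg_derivable S (X, Y \<union> W, Z) \<Longrightarrow> sg_derivable S (X, W, Y \<union> Z)"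
| contraction: "sg_derivable S (X, Y, Z) \<Longrightarrow> sg_derivable S (X, W, Y \<union> Z) \<Longrightarrow>
                sg_derivable S (X, Y \<union> W, Z)"

end

theory Submission
  imports Defs
begin

lemma sg_eqI: "sg_derivable L t \<Longrightarrow> t = t' \<Longrightarrow> sg_derivable L t'"
  by simp

lemma sg_dec:
  assumes "sg_derivable L (X, Y, Z)" "Y' \<subseteq> Y"
  shows "sg_derivable L (X, Y', Z)"
proof -
  have "Y' \<union> Y = Y" using assms(2) by blast
  then have "sg_derivable L (X, Y' \<union> Y, Z)" using assms(1) by simp
  then show ?thesis by (rule sg_derivable.decomposition)
qed

lemma sg_wu:
  assumes "sg_derivable L (X, Y, Z)" "Y1 \<subseteq> Y" "W1 \<subseteq> Y"
  shows "sg_derivable L (X, W1, Y1 \<union> Z)"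
proof -
  have "Y1 \<union> W1 \<subseteq> Y" using assms(2,3) by blast
  then have "sg_derivable L (X, Y1 \<union> W1, Z)" using sg_dec[OF assms(1)] by blast
  then show ?thesis by (rule sg_derivable.weak_union)
qed

lemma sg_sym: "sg_derivable L (X, Y, Z) \<Longrightarrow> sg_derivable L (Y, X, Z)"
  by (rule sg_derivable.symmetry)

lemma sg_contr:
  assumes "sg_derivable L (X, Y, Z)" "sg_derivable L (X, W, Z2)" "Z2 = Y \<union> Z"
  shows "sg_derivable L (X, Y \<union> W, Z)"
proof -
  have "sg_derivable L (X, W, Y \<union> Z)" using assms(2,3) by simp
  with assms(1) show ?thesis by (rule sg_derivable.contraction)
qed

locale mctx =
  fixes n :: nat and D B :: "(nat \<times> nat) set"
  assumes Dsub: "D \<subseteq> {1..n} \<times> {1..n}"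
    and Bsub: "B \<subseteq> {1..n} \<times> {1..n}"
    and symB: "sym B"
    and topo: "topological D"
begin

lemma D_lt: "(a, b) \<in> D \<Longrightarrow> a < b"
  using topo unfolding topological_def by blast

lemma rt_le: "(a, b) \<in> D\<^sup>* \<Longrightarrow> a \<le> b"
  by (induction rule: rtrancl_induct) (auto dest: D_lt)

lemma rt_antisym: "(a, b) \<in> D\<^sup>* \<Longrightarrow> (b, a) \<in> D\<^sup>* \<Longrightarrow> a = b"
  using rt_le[of a b] rt_le[of b a] by simp

lemma rt_first: "(a, b) \<in> D\<^sup>* \<Longrightarrow> a = b \<or> (\<exists>c. (a, c) \<in> D)"
  by (erule converse_rtranclE) blast+

lemma an_mem: "x \<in> S \<Longrightarrow> x \<in> an D S"
  unfolding an_def by auto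

lemma an_sup: "S \<subseteq> an D S"
  unfolding an_def by auto

lemma an_mono: "S \<subseteq> T \<Longrightarrow> an D S \<subseteq> an D T"
  unfolding an_def by auto

lemma an_an: "an D (an D S) = an D S"
  unfolding an_def by (blast intro: rtrancl_trans)

lemma an_sub_anc: "S \<subseteq> A \<Longrightarrow> an D A = A \<Longrightarrow> an D S \<subseteq> A"
  using an_mono by blast

lemma anc_elem: "an D A = A \<Longrightarrow> (u, w) \<in> D\<^sup>* \<Longrightarrow> w \<in> A \<Longrightarrow> u \<in> A"
  unfolding an_def by blast

lemma an_interval: "S \<subseteq> {1..m} \<Longrightarrow> m \<le> n \<Longrightarrow> an D S \<subseteq> {1..m}"
proof
  fix x assume S: "S \<subseteq> {1..m}" and mn: "m \<le> n" and x: "x \<in> an D S"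
  then obtain h where h: "h \<in> S" "(x, h) \<in> D\<^sup>*" unfolding an_def by auto
  have "x \<le> h" using rt_le h by auto
  moreover have "1 \<le> x"
    using rt_first[OF h(2)] h S Dsub by auto
  ultimately show "x \<in> {1..m}" using h S by auto
qed

lemma interval_anc: "m \<le> n \<Longrightarrow> an D {1..m} = {1..m}"
  using an_interval[of "{1..m}" m] an_sup[of "{1..m}"] by auto

lemma anc_path:
  assumes "an D A = A" "(w, h) \<in> D\<^sup>*" "h \<in> A"
  shows "(w, h) \<in> (D \<inter> A \<times> A)\<^sup>*"
  using assms(2)
proof (induction rule: converse_rtrancl_induct)
  case base then show ?case by simp
next
  case (step y z)
  have "z \<in> A" using step(2) assms(1,3) anc_elem by blast
  moreover have "(y, h) \<in> D\<^sup>*" using step(1,2) by (rule converse_rtrancl_into_rtrancl)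
  then have "y \<in> A" using assms(1,3) anc_elem by blast
  ultimately have "(y, z) \<in> D \<inter> A \<times> A" using step by auto
  then show ?case using step(3) by (rule converse_rtrancl_into_rtrancl)
qed

lemma rt_restr: "(a, b) \<in> (D \<inter> W \<times> W)\<^sup>* \<Longrightarrow> (a, b) \<in> D\<^sup>*"
  by (meson inf_le1 rtrancl_mono subsetD)

lemma barren_anc:
  assumes "an D W = W" "S \<subseteq> W"
  shows "barren_in D W S = {w \<in> S. \<forall>u \<in> S. (w, u) \<in> D\<^sup>* \<longrightarrow> u = w}"
proof -
  have key: "u \<in> desc_in D W w \<longleftrightarrow> (w, u) \<in> D\<^sup>*" if "u \<in> S" for u w
    using that assms anc_path[OF assms(1)] rt_restr unfolding desc_in_def by blast
  show ?thesis unfolding barren_in_def using key by auto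
qed

lemma symR: "sym (B \<inter> W \<times> W)"
  using symB unfolding sym_def by blast

lemma dis_sub: "dis_in B W v \<subseteq> W"
  unfolding dis_in_def by auto

lemma dis_self: "v \<in> W \<Longrightarrow> v \<in> dis_in B W v"
  unfolding dis_in_def by auto

lemma dis_sym: "u \<in> dis_in B W v \<Longrightarrow> v \<in> W \<Longrightarrow> v \<in> dis_in B W u"
  using sym_rtrancl[OF symR[of W]] unfolding dis_in_def sym_def by blast

lemma dis_eq: "u \<in> dis_in B W v \<Longrightarrow> v \<in> W \<Longrightarrow> dis_in B W u = dis_in B W v"
proof -
  assume u: "u \<in> dis_in B W v" and v: "v \<in> W"
  have vu: "(v, u) \<in> (B \<inter> W \<times> W)\<^sup>*" using u unfolding dis_in_def by auto
  have uv: "(u, v) \<in> (B \<inter> W \<times> W)\<^sup>*"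
    using sym_rtrancl[OF symR[of W]] vu unfolding sym_def by blast
  show ?thesis unfolding dis_in_def using vu uv by (blast intro: rtrancl_trans)
qed

lemma dis_mono: "W \<subseteq> A \<Longrightarrow> dis_in B W v \<subseteq> dis_in B A v"
proof -
  assume "W \<subseteq> A"
  then have "(B \<inter> W \<times> W)\<^sup>* \<subseteq> (B \<inter> A \<times> A)\<^sup>*" by (intro rtrancl_mono) auto
  then show ?thesis unfolding dis_in_def using \<open>W \<subseteq> A\<close> by auto
qed

lemma dis_closed: "x \<in> dis_in B A v \<Longrightarrow> (x, y) \<in> B \<Longrightarrow> y \<in> A \<Longrightarrow> y \<in> dis_in B A v"
  unfolding dis_in_def by (auto intro: rtrancl_into_rtrancl)

lemma dis_closed': "x \<in> dis_in B A v \<Longrightarrow> (y, x) \<in> B \<Longrightarrow> y \<in> A \<Longrightarrow> y \<in> dis_in B A v"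
  using dis_closed symB unfolding sym_def by blast

lemma dis_path_in:
  assumes "(v, u) \<in> (B \<inter> A \<times> A)\<^sup>*" "v \<in> A"
  shows "(v, u) \<in> (B \<inter> dis_in B A v \<times> dis_in B A v)\<^sup>*"
  using assms(1)
proof (induction rule: rtrancl_induct)
  case base then show ?case by simp
next
  case (step y z)
  have "y \<in> dis_in B A v" using step assms(2) unfolding dis_in_def
    by (metis (no_types, lifting) IntE mem_Collect_eq mem_Sigma_iff rtrancl.cases)
  moreover have "z \<in> dis_in B A v" using step unfolding dis_in_def
    by (auto intro: rtrancl_into_rtrancl)
  ultimately show ?case using step by (auto intro: rtrancl_into_rtrancl)
qed

lemma dis_restrict:
  assumes "v \<in> A" "dis_in B A v \<subseteq> W" "W \<subseteq> A"
  shows "dis_in B W v = dis_in B A v"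
proof
  show "dis_in B W v \<subseteq> dis_in B A v" using dis_mono assms by auto
next
  let ?S = "dis_in B A v"
  show "?S \<subseteq> dis_in B W v"
  proof
    fix u assume u: "u \<in> ?S"
    then have "(v, u) \<in> (B \<inter> ?S \<times> ?S)\<^sup>*" using dis_path_in assms(1) unfolding dis_in_def by blast
    moreover have "(B \<inter> ?S \<times> ?S)\<^sup>* \<subseteq> (B \<inter> W \<times> W)\<^sup>*" using assms(2) by (intro rtrancl_mono) auto
    ultimately show "u \<in> dis_in B W v" using u assms(2) unfolding dis_in_def by auto
  qed
qed

definition PP :: "nat set \<Rightarrow> nat set" where "PP S = S \<union> pa D S"

lemma pa_sub_an: "pa D S \<subseteq> an D S"
  unfolding pa_def an_def by auto

lemma pa_mono: "S \<subseteq> T \<Longrightarrow> pa D S \<subseteq> pa D T"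
  unfolding pa_def by auto

lemma PP_sub: "an D A = A \<Longrightarrow> S \<subseteq> A \<Longrightarrow> PP S \<subseteq> A"
  unfolding PP_def using pa_sub_an an_sub_anc by blast

lemma mb_eq: "an D A = A \<Longrightarrow> mb D B v A = PP (dis_in B A v) - {v}"
proof -
  assume A: "an D A = A"
  have "pa_in D A (dis_in B A v) = pa D (dis_in B A v)"
    using PP_sub[OF A dis_sub] unfolding pa_in_def pa_def PP_def using dis_sub by blast
  then show ?thesis unfolding mb_def PP_def by auto
qed

lemma fin_n: "S \<subseteq> {1..n} \<Longrightarrow> finite S"
  using finite_subset by blast

lemma barren_char_HD:
  assumes A: "an D A = A" "A \<subseteq> {1..n}" and v: "v \<in> A"
  defines "S \<equiv> dis_in B A v"
  defines "H \<equiv> {w \<in> S. \<forall>u \<in> S. (w, u) \<in> D\<^sup>* \<longrightarrow> u = w}"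
  shows "S \<subseteq> an D H" "H \<subseteq> S" "H \<noteq> {}" "an D H \<subseteq> A"
    "\<And>h. h \<in> H \<Longrightarrow> dis_in B (an D H) h = S"
    "head_dis D B H = S"
proof -
  have finS: "finite S" using dis_sub[of A v] A(2) fin_n unfolding S_def by blast
  show HS: "H \<subseteq> S" unfolding H_def by auto
  show SH: "S \<subseteq> an D H"
  proof
    fix x assume x: "x \<in> S"
    let ?U = "{u \<in> S. (x, u) \<in> D\<^sup>*}"
    have fin: "finite ?U" using finS by auto
    have ne: "x \<in> ?U" using x by auto
    let ?u = "Max ?U"
    have uU: "?u \<in> ?U" using Max_in[OF fin] ne by blast
    have "?u \<in> H"
    proof -
      have "u' = ?u" if "u' \<in> S" "(?u, u') \<in> D\<^sup>*" for u'
      proof -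
        have "u' \<in> ?U" using that uU by (auto intro: rtrancl_trans)
        then have "u' \<le> ?u" using fin by auto
        moreover have "?u \<le> u'" using rt_le that by auto
        ultimately show ?thesis by auto
      qed
      then show ?thesis unfolding H_def using uU by auto
    qed
    then show "x \<in> an D H" unfolding an_def using uU by auto
  qed
  have vS: "v \<in> S" unfolding S_def using dis_self v by auto
  show "H \<noteq> {}" using SH vS unfolding an_def by auto
  have SA: "S \<subseteq> A" unfolding S_def using dis_sub by auto
  show anH: "an D H \<subseteq> A" using an_sub_anc[OF _ A(1)] HS SA by blast
  show dh: "dis_in B (an D H) h = S" if h: "h \<in> H" for h
  proof -
    have hS: "h \<in> S" using h HS by auto
    have "dis_in B A h = S" unfolding S_def using dis_eq hS v unfolding S_def by blast
    moreover have "h \<in> A" using hS SA by auto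
    ultimately show ?thesis using dis_restrict[of h A "an D H"] SH anH by auto
  qed
  show "head_dis D B H = S"
    unfolding head_dis_def dis_set_def using dh \<open>H \<noteq> {}\<close> by auto
qed

lemma barren_def_W:
  assumes "an D W = W" "S \<subseteq> W" "an D A = A" "S \<subseteq> A"
  shows "barren_in D W S = barren_in D A S"
  using barren_anc assms by simp

lemma head_of_dis:
  assumes A: "an D A = A" "A \<subseteq> {1..n}" and v: "v \<in> A"
  defines "S \<equiv> dis_in B A v"
  defines "H \<equiv> barren_in D A S"
  shows "is_head n D B H" "head_dis D B H = S" "H \<union> tail D B H = PP S"
    "an D H \<subseteq> A" "S \<subseteq> an D H" "H \<subseteq> S"
proof -
  have SA: "S \<subseteq> A" unfolding S_def by (rule dis_sub)
  have Hc: "H = {w \<in> S. \<forall>u \<in> S. (w, u) \<in> D\<^sup>* \<longrightarrow> u = w}"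
    unfolding H_def using barren_anc[OF A(1) SA] .
  note hd = barren_char_HD[OF A v, folded S_def, folded Hc]
  show "head_dis D B H = S" using hd by simp
  show "an D H \<subseteq> A" "S \<subseteq> an D H" "H \<subseteq> S" using hd by auto
  show "H \<union> tail D B H = PP S" using hd(2,6) unfolding tail_def PP_def by auto
  have Hn: "H \<subseteq> {1..n}" using hd(2) SA A(2) by auto
  have nanc: "an D {1..n} = {1..n}" using interval_anc by simp
  have "barren_in D {1..n} H = H"
    unfolding barren_anc[OF nanc Hn] using Hc by auto
  moreover obtain h where h: "h \<in> H" using hd(3) by auto
  moreover have "H \<subseteq> dis_in B (an D H) h" using hd(5)[OF h] hd(2) by simp
  ultimately show "is_head n D B H" unfolding is_head_def using hd(3) Hn by blast
qed

lemma HT: "H \<union> tail D B H = PP (head_dis D B H)"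
proof -
  have "H \<subseteq> head_dis D B H"
    unfolding head_dis_def dis_set_def using dis_self an_sup by blast
  then show ?thesis unfolding tail_def PP_def by auto
qed

lemma head_fin: "is_head n D B H \<Longrightarrow> finite H"
  unfolding is_head_def using fin_n by blast

lemma head_barren: "is_head n D B H \<Longrightarrow> {w \<in> H. \<forall>u \<in> H. (w, u) \<in> D\<^sup>* \<longrightarrow> u = w} = H"
  unfolding is_head_def using barren_anc[OF interval_anc[of n]] by auto

lemma barren_remove_anc:
  assumes H: "is_head n D B H" and k: "k \<in> H"
  shows "an D (an D H - {k}) = an D H - {k}"
proof
  show "an D H - {k} \<subseteq> an D (an D H - {k})" by (rule an_sup)
next
  show "an D (an D H - {k}) \<subseteq> an D H - {k}"
  proof
    fix u assume u: "u \<in> an D (an D H - {k})"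
    then obtain w where w: "w \<in> an D H" "w \<noteq> k" "(u, w) \<in> D\<^sup>*" unfolding an_def by auto
    then obtain h where h: "h \<in> H" "(w, h) \<in> D\<^sup>*" unfolding an_def by auto
    have "u \<in> an D H" using w h unfolding an_def by (blast intro: rtrancl_trans)
    moreover have "u \<noteq> k"
    proof
      assume "u = k"
      then have "(k, h) \<in> D\<^sup>*" using w h by (blast intro: rtrancl_trans)
      then have "h = k" using head_barren[OF H] k h(1) by blast
      then show False using w h \<open>u = k\<close> rt_antisym by blast
    qed
    ultimately show "u \<in> an D H - {k}" by auto
  qed
qed

lemma head_max:
  assumes "an D A = A" "A \<subseteq> {1..m}" "m \<le> n" "m \<in> A"
  shows "m \<in> barren_in D A (dis_in B A m)" "Max (barren_in D A (dis_in B A m)) = m"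
proof -
  have SA: "dis_in B A m \<subseteq> A" by (rule dis_sub)
  have mS: "m \<in> dis_in B A m" using dis_self assms by auto
  have "u = m" if "u \<in> dis_in B A m" "(m, u) \<in> D\<^sup>*" for u
    using that SA assms(2) rt_le[of m u] by auto
  then show mH: "m \<in> barren_in D A (dis_in B A m)"
    unfolding barren_anc[OF assms(1) SA] using mS by auto
  have "barren_in D A (dis_in B A m) \<subseteq> {1..m}"
    using SA assms(2) unfolding barren_in_def by auto
  then show "Max (barren_in D A (dis_in B A m)) = m"
    using mH by (intro Max_eqI) (auto dest: finite_subset[OF _ finite_atLeastAtMost])
qed

definition ostmt :: "nat set \<Rightarrow> nat \<Rightarrow> indep" where
  "ostmt A v = ({v}, A - (mb D B v A \<union> {v}), mb D B v A)"

lemma ostmt_eq: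
  assumes "an D A = A" "v \<in> A"
  shows "ostmt A v = ({v}, A - PP (dis_in B A v), PP (dis_in B A v) - {v})"
proof -
  have "v \<in> PP (dis_in B A v)" unfolding PP_def using dis_self assms by auto
  then show ?thesis unfolding ostmt_def mb_eq[OF assms(1)] by auto
qed

lemma tilde_a: "m \<in> {1..n} \<Longrightarrow>
  ({m}, {1..m-1} - mb D B m {1..m}, mb D B m {1..m}) \<in> L_tilde n D B"
  unfolding L_tilde_def L_tilde_i_def by blast

lemma tilde_b:
  assumes "m \<in> {1..n}" "is_head n D B H'" "Max H' = m"
    "H' \<noteq> barren_in D {1..m} (dis_in B {1..m} m)"
    "k \<in> ceil D (ham D B H')" "\<forall>x \<in> ceil D (ham D B H'). k \<le> x"
    "power_parent n D B Hs k H'"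
    "\<forall>H. power_parent n D B H k H' \<longrightarrow> an D H \<subseteq> an D Hs"
  shows "assoc_indep D B Hs {k} H' \<in> L_tilde n D B"
proof -
  have "assoc_indep D B Hs {k} H' \<in> L_tilde_i n D B m"
    unfolding L_tilde_i_def using assms(2-8) by blast
  then show ?thesis unfolding L_tilde_def using assms(1) by blast
qed

lemma rt_B_n: "(a, b) \<in> B \<Longrightarrow> a \<in> {1..n} \<and> b \<in> {1..n}"
  using Bsub by auto

lemma case1:
  assumes mn: "m \<le> n"
    and IHm: "\<forall>A' u. A' \<subseteq> {1..m-1} \<longrightarrow> an D A' = A' \<longrightarrow> u \<in> A' \<longrightarrow> (\<forall>c\<in>A'. (u, c) \<notin> D)
               \<longrightarrow> sg_derivable (L_tilde n D B) (ostmt A' u)"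
  shows "A \<subseteq> {1..m} \<Longrightarrow> an D A = A \<Longrightarrow> m \<in> A \<Longrightarrow> sg_derivable (L_tilde n D B) (ostmt A m)"
proof (induction "card ({1..m} - A)" arbitrary: A rule: less_induct)
  case less
  note IH = less.hyps
  have Am: "A \<subseteq> {1..m}" and Aanc: "an D A = A" and mA: "m \<in> A" using less.prems by auto
  have An: "A \<subseteq> {1..n}" using Am mn by auto
  have m1: "m \<in> {1..n}" using Am mA mn by auto
  define S where "S = dis_in B A m"
  define Hm where "Hm = sib B S - S"
  have SA: "S \<subseteq> A" unfolding S_def by (rule dis_sub)
  have mS: "m \<in> S" unfolding S_def using dis_self mA by auto
  have ostA: "ostmt A m = ({m}, A - PP S, PP S - {m})"
    unfolding S_def by (rule ostmt_eq[OF Aanc mA])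
  define S0 where "S0 = dis_in B {1..m} m"
  have m_anc: "an D {1..m} = {1..m}" using interval_anc mn by simp
  have SS0: "S \<subseteq> S0" unfolding S_def S0_def by (rule dis_mono[OF Am])
  show ?case
  proof (cases "\<exists>z \<in> {1..m}. z \<in> Hm")
    case False
    have "x \<in> S" if "x \<in> S0" for x
    proof -
      have "(m, x) \<in> (B \<inter> {1..m} \<times> {1..m})\<^sup>*" using that unfolding S0_def dis_in_def by auto
      then show ?thesis
      proof (induction rule: rtrancl_induct)
        case base then show ?case using mS by simp
      next
        case (step y z)
        show ?case
        proof (rule ccontr)
          assume "z \<notin> S"
          moreover have "(z, y) \<in> B" using step(2) symB unfolding sym_def by auto
          ultimately have "z \<in> Hm" unfolding Hm_def sib_def using step(3) by auto
          then show False using False step(2) by auto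
        qed
      qed
    qed
    then have "S0 = S" using SS0 by auto
    then have mbm: "mb D B m {1..m} = PP S - {m}" unfolding S0_def using mb_eq[OF m_anc] by simp
    have "sg_derivable (L_tilde n D B) ({m}, {1..m-1} - (PP S - {m}), PP S - {m})"
      using sg_derivable.base[OF tilde_a[OF m1]] unfolding mbm .
    moreover have "A - PP S \<subseteq> {1..m-1} - (PP S - {m})"
    proof
      fix x assume x: "x \<in> A - PP S"
      then have "x \<in> {1..m}" "x \<noteq> m" using Am mS unfolding PP_def by auto
      then show "x \<in> {1..m-1} - (PP S - {m})" using x by auto
    qed
    ultimately show ?thesis unfolding ostA by (rule sg_dec)
  next
    case True
    then obtain z where z: "z \<in> {1..m}" "z \<in> Hm" by auto

    have Hmn: "Hm \<subseteq> {1..n}" unfolding Hm_def sib_def using Bsub by auto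
    have finHm: "finite Hm" using Hmn fin_n by blast
    have HmS: "Hm \<inter> S = {}" unfolding Hm_def by auto
    have Hm_sib: "\<exists>y\<in>S. (h, y) \<in> B" if "h \<in> Hm" for h using that unfolding Hm_def sib_def by auto
    define k where "k = Min (ceil D Hm)"
    have ceil_sub: "ceil D Hm \<subseteq> Hm" unfolding ceil_def by auto
    have finC: "finite (ceil D Hm)" using finite_subset[OF ceil_sub finHm] .
    have HmNE: "Hm \<noteq> {}" using z by auto
    have minHm: "Min Hm \<in> ceil D Hm"
    proof -
      have mi: "Min Hm \<in> Hm" using Min_in[OF finHm HmNE] .
      have "u = Min Hm" if "u \<in> Hm" "u \<in> an D {Min Hm}" for u
      proof -
        have "(u, Min Hm) \<in> D\<^sup>*" using that unfolding an_def by auto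
        then have "u \<le> Min Hm" by (rule rt_le)
        moreover have "Min Hm \<le> u" using Min_le[OF finHm that(1)] .
        ultimately show ?thesis by simp
      qed
      moreover have "Min Hm \<in> an D {Min Hm}" by (rule an_mem) simp
      ultimately show ?thesis unfolding ceil_def using mi by blast
    qed
    have kC: "k \<in> ceil D Hm" unfolding k_def using Min_in[OF finC] minHm by blast
    have kmin: "\<forall>x \<in> ceil D Hm. k \<le> x" unfolding k_def using Min_le[OF finC] by blast
    have kHm: "k \<in> Hm" using kC ceil_sub by blast
    have km: "k \<le> m" using kmin minHm Min_le[OF finHm z(2)] z(1) by fastforce
    have kS: "k \<notin> S" using kHm HmS by blast
    have k1: "k \<in> {1..m}" using km kHm Hmn by auto
    have kne: "k \<noteq> m" using kS mS by blast
    define B0 where "B0 = {1..m} - {u. \<exists>h\<in>Hm. (h, u) \<in> D\<^sup>*}"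
    have B0m: "B0 \<subseteq> {1..m}" unfolding B0_def by auto
    have B0anc: "an D B0 = B0"
    proof
      show "B0 \<subseteq> an D B0" by (rule an_sup)
      show "an D B0 \<subseteq> B0"
      proof
        fix u assume u: "u \<in> an D B0"
        then obtain w where w: "w \<in> B0" "(u, w) \<in> D\<^sup>*" unfolding an_def by auto
        have "u \<in> {1..m}" using an_interval[OF B0m mn] u by auto
        moreover have "\<not> (\<exists>h\<in>Hm. (h, u) \<in> D\<^sup>*)"
          using w unfolding B0_def by (blast intro: rtrancl_trans)
        ultimately show "u \<in> B0" unfolding B0_def by auto
      qed
    qed
    have AB0: "A \<subseteq> B0"
    proof
      fix u assume u: "u \<in> A"
      have "\<not> (h, u) \<in> D\<^sup>*" if h: "h \<in> Hm" for h
      proof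
        assume "(h, u) \<in> D\<^sup>*"
        then have hA: "h \<in> A" using anc_elem[OF Aanc] u by blast
        obtain y where "y \<in> S" "(h, y) \<in> B" using Hm_sib h by blast
        then have "h \<in> S" unfolding S_def using dis_closed' hA by blast
        then show False using h HmS by blast
      qed
      then show "u \<in> B0" unfolding B0_def using u Am by auto
    qed
    have kB0: "k \<notin> B0" unfolding B0_def using kHm by blast
    have desc_notB0: "u \<notin> B0" if "(k, u) \<in> D\<^sup>*" for u
      unfolding B0_def using that kHm by blast
    have mB0: "m \<in> B0" using AB0 mA by blast
    have SB0: "dis_in B B0 m = S"
    proof
      show "S \<subseteq> dis_in B B0 m" unfolding S_def by (rule dis_mono[OF AB0])
      show "dis_in B B0 m \<subseteq> S"
      proof
        fix x assume "x \<in> dis_in B B0 m"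
        then have "(m, x) \<in> (B \<inter> B0 \<times> B0)\<^sup>*" unfolding dis_in_def by auto
        then show "x \<in> S"
        proof (induction rule: rtrancl_induct)
          case base then show ?case using mS by simp
        next
          case (step y w)
          show ?case
          proof (rule ccontr)
            assume "w \<notin> S"
            moreover have "(w, y) \<in> B" using step(2) symB unfolding sym_def by auto
            ultimately have "w \<in> Hm" unfolding Hm_def sib_def using step(3) by auto
            then show False using step(2) unfolding B0_def by blast
          qed
        qed
      qed
    qed
    define C where "C = insert k B0"
    have Cm: "C \<subseteq> {1..m}" unfolding C_def using B0m k1 by auto
    have Cn: "C \<subseteq> {1..n}" using Cm mn by auto
    have Canc: "an D C = C"
    proof
      show "C \<subseteq> an D C" by (rule an_sup)
      show "an D C \<subseteq> C"
      proof
        fix u assume u: "u \<in> an D C"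
        then obtain w where w: "w \<in> C" "(u, w) \<in> D\<^sup>*" unfolding an_def by auto
        show "u \<in> C"
        proof (cases "w = k")
          case False
          then have "w \<in> B0" using w unfolding C_def by auto
          then show ?thesis using anc_elem[OF B0anc w(2)] unfolding C_def by auto
        next
          case True
          show ?thesis
          proof (cases "u = k")
            case True then show ?thesis unfolding C_def by auto
          next
            case False
            have "u \<in> {1..m}" using an_interval[OF Cm mn] u by auto
            moreover have "\<not> (h, u) \<in> D\<^sup>*" if h: "h \<in> Hm" for h
            proof
              assume hu: "(h, u) \<in> D\<^sup>*"
              then have "(h, k) \<in> D\<^sup>*" using w True by (blast intro: rtrancl_trans)
              then have "h \<in> an D {k}" unfolding an_def by auto
              then have "h = k" using kC h unfolding ceil_def by blast
              then show False using hu w True False rt_antisym by blast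
            qed
            ultimately show ?thesis unfolding C_def B0_def by auto
          qed
        qed
      qed
    qed
    have mC: "m \<in> C" unfolding C_def using mB0 by auto
    have AC: "A \<subseteq> C" unfolding C_def using AB0 by auto
    have kA: "k \<notin> A" using AB0 kB0 by blast
    have card_lt: "card ({1..m} - C) < card ({1..m} - A)"
    proof (rule psubset_card_mono)
      show "finite ({1..m} - A)" by simp
      show "{1..m} - C \<subset> {1..m} - A" using AC k1 kA unfolding C_def by auto
    qed
    have IHC: "sg_derivable (L_tilde n D B) (ostmt C m)"
      using IH[OF card_lt Cm Canc mC] .
    define SC where "SC = dis_in B C m"
    have ostC: "ostmt C m = ({m}, C - PP SC, PP SC - {m})"
      unfolding SC_def by (rule ostmt_eq[OF Canc mC])
    have SSC: "S \<subseteq> SC" unfolding SC_def SB0[symmetric] by (rule dis_mono) (auto simp: C_def)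
    have kSC: "k \<in> SC"
    proof -
      obtain y where "y \<in> S" "(k, y) \<in> B" using Hm_sib kHm by blast
      then show ?thesis using dis_closed'[of y C m k] SSC k1 unfolding SC_def C_def by blast
    qed
    have SCC: "SC \<subseteq> C" unfolding SC_def by (rule dis_sub)
    have PPSC: "PP SC \<subseteq> C" using PP_sub[OF Canc SCC] .
    have PPS: "PP S \<subseteq> PP SC" using SSC pa_mono[OF SSC] unfolding PP_def by auto
    have kPPS: "k \<notin> PP S"
    proof
      assume "k \<in> PP S"
      then have "k \<in> pa D S" using kS unfolding PP_def by auto
      then obtain y where "y \<in> S" "(k, y) \<in> D" unfolding pa_def by auto
      then show False using desc_notB0[of y] SB0 dis_sub[of B0 m] by auto
    qed
    have mPPS: "m \<in> PP S" using mS unfolding PP_def by auto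
    have m_childless_C: "(m, c) \<notin> D" if "c \<in> C" for c
      using that Cm D_lt[of m c] by auto
    define E where "E = C - {m}"
    have Eanc: "an D E = E"
    proof
      show "E \<subseteq> an D E" by (rule an_sup)
      show "an D E \<subseteq> E"
      proof
        fix u assume u: "u \<in> an D E"
        then obtain w where w: "w \<in> E" "(u, w) \<in> D\<^sup>*" unfolding an_def by auto
        have "u \<in> C" using anc_elem[OF Canc w(2)] w(1) unfolding E_def by auto
        moreover have "u \<noteq> m" using w rt_le[OF w(2)] Cm unfolding E_def by fastforce
        ultimately show "u \<in> E" unfolding E_def by auto
      qed
    qed
    have Em: "E \<subseteq> {1..m-1}" using Cm unfolding E_def by fastforce
    have kE: "k \<in> E" unfolding E_def C_def using kne by auto
    have k_childless: "\<forall>c\<in>E. (k, c) \<notin> D"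
    proof (intro ballI notI)
      fix c assume c: "c \<in> E" "(k, c) \<in> D"
      then have "c \<noteq> k" using D_lt by fastforce
      then have "c \<in> B0" using c unfolding E_def C_def by auto
      then show False using desc_notB0 c(2) by blast
    qed
    have IHk: "sg_derivable (L_tilde n D B) (ostmt E k)" using IHm Em Eanc kE k_childless by blast
    define Sk where "Sk = dis_in B E k"
    have ostE: "ostmt E k = ({k}, E - PP Sk, PP Sk - {k})"
      unfolding Sk_def by (rule ostmt_eq[OF Eanc kE])
    have SkSC: "Sk \<subseteq> SC"
    proof -
      have "Sk \<subseteq> dis_in B C k" unfolding Sk_def E_def by (rule dis_mono) auto
      also have "dis_in B C k = SC" unfolding SC_def using dis_eq[OF kSC[unfolded SC_def] mC] .
      finally show ?thesis .
    qed
    have SkE: "Sk \<subseteq> E" unfolding Sk_def by (rule dis_sub)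
    have PPSk: "PP Sk \<subseteq> PP SC" using SkSC pa_mono[OF SkSC] unfolding PP_def by auto
    have mPPSk: "m \<notin> PP Sk"
    proof
      assume "m \<in> PP Sk"
      moreover have "m \<notin> Sk" using SkE unfolding E_def by auto
      ultimately obtain y where "y \<in> Sk" "(m, y) \<in> D" unfolding PP_def pa_def by auto
      then show False using m_childless_C SkE unfolding E_def by auto
    qed
    define Q where "Q = PP SC - {m, k}"
    define W0 where "W0 = C - PP SC"
    have mPPSC: "m \<in> PP SC" using mPPS PPS by auto
    have s1: "sg_derivable (L_tilde n D B) ({k}, W0, (Q - (PP Sk - {k})) \<union> (PP Sk - {k}))"
    proof (rule sg_wu[OF IHk[unfolded ostE]])
      show "W0 \<subseteq> E - PP Sk" unfolding W0_def E_def using PPSk mPPSC by auto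
      show "Q - (PP Sk - {k}) \<subseteq> E - PP Sk" unfolding Q_def E_def using PPSC by auto
    qed
    have "(Q - (PP Sk - {k})) \<union> (PP Sk - {k}) = Q" unfolding Q_def using PPSk mPPSk by auto
    then have s2: "sg_derivable (L_tilde n D B) (W0, {k}, Q)" using sg_sym[OF s1] by simp
    have "PP SC - {m} = {k} \<union> Q" unfolding Q_def using kSC kne unfolding PP_def by auto
    then have s3: "sg_derivable (L_tilde n D B) (W0, {m}, {k} \<union> Q)"
      using sg_sym[OF IHC[unfolded ostC]] unfolding W0_def by simp
    have s4: "sg_derivable (L_tilde n D B) (W0, {k} \<union> {m}, Q)" using sg_contr[OF s2 s3] by simp
    have s5: "sg_derivable (L_tilde n D B) ({m}, W0, Q)" using sg_sym[OF sg_dec[OF s4]] by blast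
    have tilde: "sg_derivable (L_tilde n D B) ({m}, PP SC - (PP S \<union> {k}), PP S - {m})"
    proof -
      define H' where "H' = barren_in D A S"
      define Hs where "Hs = barren_in D C SC"
      note hA = head_of_dis[OF Aanc An mA, folded S_def, folded H'_def]
      note hC = head_of_dis[OF Canc Cn mC, folded SC_def, folded Hs_def]
      have maxH': "Max H' = m" unfolding H'_def S_def using head_max[OF Aanc Am mn mA] by simp
      have maxHs: "Max Hs = m" unfolding Hs_def SC_def using head_max[OF Canc Cm mn mC] by simp
      have hamH': "ham D B H' = Hm" unfolding ham_def hA(2) Hm_def ..
      have kHs: "k \<in> Hs"
      proof -
        have "u = k" if "u \<in> SC" "(k, u) \<in> D\<^sup>*" for u
        proof (rule ccontr)
          assume "u \<noteq> k"
          then have "u \<in> B0" using that SCC unfolding C_def by auto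
          then show False using desc_notB0 that(2) by blast
        qed
        then show ?thesis unfolding Hs_def barren_anc[OF Canc SCC] using kSC by auto
      qed
      define W where "W = an D Hs - {k}"
      have Wanc: "an D W = W" unfolding W_def by (rule barren_remove_anc[OF hC(1) kHs])
      have WB0: "W \<subseteq> B0" unfolding W_def using hC(4) unfolding C_def by auto
      have SW: "S \<subseteq> W" unfolding W_def using SSC hC(5) kS by auto
      have disW: "dis_in B W m = S"
        using dis_restrict[OF mB0 _ WB0] SB0 SW by simp
      have step: "head_step D B Hs {k} H'"
        unfolding head_step_def maxHs W_def[symmetric] disW
        using kHs kne barren_def_W[OF Wanc SW Aanc SA] unfolding H'_def by auto
      have pp: "power_parent n D B Hs k H'"
        unfolding power_parent_def using hA(1) hC(1) maxH' maxHs step by simp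
      have neq: "H' \<noteq> barren_in D {1..m} (dis_in B {1..m} m)"
      proof
        assume eq: "H' = barren_in D {1..m} (dis_in B {1..m} m)"
        have "m \<in> {1..m}" using m1 by auto
        note h0 = head_of_dis[OF m_anc _ this]
        have "S = S0" using hA(2) h0(2) eq mn unfolding S0_def by auto
        moreover have "z \<in> S0"
        proof -
          obtain y where "y \<in> S" "(z, y) \<in> B" using Hm_sib z(2) by blast
          then show ?thesis using dis_closed'[of y "{1..m}" m z] SS0 z(1) unfolding S0_def by blast
        qed
        ultimately show False using z(2) HmS by blast
      qed
      have maxim: "\<forall>H. power_parent n D B H k H' \<longrightarrow> an D H \<subseteq> an D Hs"
      proof (intro allI impI)
        fix H assume ppH: "power_parent n D B H k H'"
        then have hH: "is_head n D B H" and mH: "Max H = m" and stH: "head_step D B H {k} H'"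
          unfolding power_parent_def using maxH' by auto
        have finH: "finite H" using head_fin[OF hH] .
        have Hne: "H \<noteq> {}" using hH unfolding is_head_def by auto
        have mHH: "m \<in> H" using Max_in[OF finH Hne] mH by simp
        have kH: "k \<in> H" using stH unfolding head_step_def by auto
        define W' where "W' = an D H - {k}"
        have W'anc: "an D W' = W'" unfolding W'_def by (rule barren_remove_anc[OF hH kH])
        have Hn: "H \<subseteq> {1..n}" using hH unfolding is_head_def by auto
        have Hm': "H \<subseteq> {1..m}" using Hn Max_ge[OF finH] mH by fastforce
        have anHm: "an D H \<subseteq> {1..m}" using an_interval[OF Hm' mn] .
        have W'n: "W' \<subseteq> {1..n}" using anHm mn unfolding W'_def by auto
        have mW': "m \<in> W'" unfolding W'_def using mHH an_sup kne by auto
        have H'eq: "H' = barren_in D W' (dis_in B W' m)"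
          using stH mH unfolding head_step_def W'_def by auto
        have "head_dis D B H' = dis_in B W' m"
          using head_of_dis(2)[OF W'anc W'n mW'] H'eq by simp
        then have S2: "dis_in B W' m = S" using hA(2) by simp
        have anHC: "an D H \<subseteq> C"
        proof
          fix x assume x: "x \<in> an D H"
          show "x \<in> C"
          proof (cases "x = k")
            case True then show ?thesis unfolding C_def by simp
          next
            case False
            then have xW: "x \<in> W'" unfolding W'_def using x by simp
            have "\<not> (h0, x) \<in> D\<^sup>*" if h0: "h0 \<in> Hm" for h0
            proof
              assume "(h0, x) \<in> D\<^sup>*"
              then have h0W: "h0 \<in> W'" using anc_elem[OF W'anc] xW by blast
              obtain y where "y \<in> S" "(h0, y) \<in> B" using Hm_sib h0 by blast
              then have "h0 \<in> S" using dis_closed'[of y W' m h0] S2 h0W by blast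
              then show False using h0 HmS by blast
            qed
            then show ?thesis unfolding C_def B0_def using x anHm by auto
          qed
        qed
        obtain v0 where v0: "v0 \<in> H" "H \<subseteq> dis_in B (an D H) v0" using hH unfolding is_head_def by auto
        have "dis_in B (an D H) m = dis_in B (an D H) v0"
          using dis_eq[of m "an D H" v0] v0 mHH an_sup by blast
        then have "H \<subseteq> dis_in B (an D H) m" using v0 by simp
        also have "\<dots> \<subseteq> SC" unfolding SC_def by (rule dis_mono[OF anHC])
        also have "\<dots> \<subseteq> an D Hs" by (rule hC(5))
        finally have "H \<subseteq> an D Hs" .
        then show "an D H \<subseteq> an D Hs" using an_mono an_an by blast
      qed
      have kmin': "\<forall>x \<in> ceil D (ham D B H'). k \<le> x" using kmin hamH' by simp
      have "assoc_indep D B Hs {k} H' \<in> L_tilde n D B"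
        using tilde_b[OF m1 hA(1) maxH' neq _ kmin' pp maxim] kC hamH' by simp
      moreover have "assoc_indep D B Hs {k} H' = ({m}, PP SC - (PP S \<union> {k}), PP S - {m})"
        unfolding assoc_indep_def hA(3) hC(3) maxHs by simp
      ultimately show ?thesis using sg_derivable.base by metis
    qed
    have "(PP SC - (PP S \<union> {k})) \<union> (PP S - {m}) = Q" unfolding Q_def using PPS mPPS kPPS by auto
    then have s6: "sg_derivable (L_tilde n D B) ({m}, (PP SC - (PP S \<union> {k})) \<union> W0, PP S - {m})"
      using sg_contr[OF tilde s5] by simp
    have "A - PP S \<subseteq> (PP SC - (PP S \<union> {k})) \<union> W0" unfolding W0_def using AC kA by auto
    then show ?thesis unfolding ostA by (rule sg_dec[OF s6])
  qed
qed

lemma case2: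
  assumes Aanc: "an D A = A" and Am: "A \<subseteq> {1..m}" and mn: "m \<le> n" and mA: "m \<in> A"
    and vA: "v \<in> A" and vm: "v \<noteq> m" and vch: "\<forall>c\<in>A. (v, c) \<notin> D"
    and I1: "sg_derivable L (ostmt (A - {m}) v)" and I2: "sg_derivable L (ostmt A m)"
  shows "sg_derivable L (ostmt A v)"
proof -
  define A' where "A' = A - {m}"
  have A'anc: "an D A' = A'"
  proof
    show "A' \<subseteq> an D A'" by (rule an_sup)
    show "an D A' \<subseteq> A'"
    proof
      fix u assume u: "u \<in> an D A'"
      then obtain w where w: "w \<in> A'" "(u, w) \<in> D\<^sup>*" unfolding an_def by auto
      have "u \<in> A" using anc_elem[OF Aanc w(2)] w(1) unfolding A'_def by auto
      moreover have "u \<noteq> m" using w rt_le[OF w(2)] Am unfolding A'_def by fastforce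
      ultimately show "u \<in> A'" unfolding A'_def by auto
    qed
  qed
  have vA': "v \<in> A'" unfolding A'_def using vA vm by auto
  have A'A: "A' \<subseteq> A" unfolding A'_def by auto
  define S where "S = dis_in B A v"
  have SA: "S \<subseteq> A" unfolding S_def by (rule dis_sub)
  have vS: "v \<in> S" unfolding S_def using dis_self vA by auto
  have mch: "(m, c) \<notin> D" if "c \<in> A" for c using that Am D_lt[of m c] by auto
  have ostA: "ostmt A v = ({v}, A - PP S, PP S - {v})" unfolding S_def by (rule ostmt_eq[OF Aanc vA])
  have PPSA: "PP S \<subseteq> A" using PP_sub[OF Aanc SA] .
  show ?thesis
  proof (cases "m \<in> S")
    case False
    have S'eq: "dis_in B A' v = S" unfolding S_def
      using dis_restrict[OF vA _ A'A] SA False unfolding S_def A'_def by auto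
    have ost1: "ostmt A' v = ({v}, A' - PP S, PP S - {v})"
      using ostmt_eq[OF A'anc vA'] S'eq by simp
    define Sm where "Sm = dis_in B A m"
    have SmA: "Sm \<subseteq> A" unfolding Sm_def by (rule dis_sub)
    have ost2: "ostmt A m = ({m}, A - PP Sm, PP Sm - {m})" unfolding Sm_def by (rule ostmt_eq[OF Aanc mA])
    have vSm: "v \<notin> Sm"
    proof
      assume "v \<in> Sm"
      then have "m \<in> S" unfolding S_def Sm_def using dis_sym mA by blast
      then show False using False by simp
    qed
    have vPPSm: "v \<notin> PP Sm"
    proof
      assume "v \<in> PP Sm"
      then obtain y where "y \<in> Sm" "(v, y) \<in> D" using vSm unfolding PP_def pa_def by auto
      then show False using vch SmA by auto
    qed
    have PPSmA: "PP Sm \<subseteq> A" using PP_sub[OF Aanc SmA] .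
    have a0: "sg_derivable L ({m}, {v}, (A - PP Sm - {v}) \<union> (PP Sm - {m}))"
      by (rule sg_wu[OF I2[unfolded ost2]]) (use vA vPPSm vm in auto)
    have mPPSm: "m \<in> PP Sm" unfolding Sm_def PP_def using dis_self mA by auto
    have "(A - PP Sm - {v}) \<union> (PP Sm - {m}) = A - {m, v}" using PPSmA vPPSm mPPSm by auto
    with a0 have a1: "sg_derivable L ({v}, {m}, A - {m, v})" using sg_sym by metis
    have mPPS: "m \<notin> PP S"
    proof
      assume "m \<in> PP S"
      then obtain y where "y \<in> S" "(m, y) \<in> D" using False unfolding PP_def pa_def by auto
      then show False using mch SA by auto
    qed
    have vPPS: "v \<in> PP S" using vS unfolding PP_def by auto
    have "(A' - PP S) \<union> (PP S - {v}) = A - {m, v}" unfolding A'_def using PPSA mPPS vPPS by auto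
    then have "sg_derivable L ({v}, (A' - PP S) \<union> {m}, PP S - {v})"
      using sg_contr[OF I1[folded A'_def, unfolded ost1] a1] by simp
    moreover have "(A' - PP S) \<union> {m} = A - PP S" unfolding A'_def using mA mPPS by auto
    ultimately show ?thesis unfolding ostA by simp
  next
    case True
    have Sm: "dis_in B A m = S" unfolding S_def using dis_eq[OF True[unfolded S_def] vA] .
    have ost2: "ostmt A m = ({m}, A - PP S, PP S - {m})" using ostmt_eq[OF Aanc mA] Sm by simp
    define S' where "S' = dis_in B A' v"
    have ost1: "ostmt A' v = ({v}, A' - PP S', PP S' - {v})" unfolding S'_def by (rule ostmt_eq[OF A'anc vA'])
    have S'S: "S' \<subseteq> S" unfolding S'_def S_def by (rule dis_mono[OF A'A])
    have S'A': "S' \<subseteq> A'" unfolding S'_def by (rule dis_sub)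
    have PPS': "PP S' \<subseteq> PP S" using S'S pa_mono[OF S'S] unfolding PP_def by auto
    have mPPS': "m \<notin> PP S'"
    proof
      assume "m \<in> PP S'"
      moreover have "m \<notin> S'" using S'A' unfolding A'_def by auto
      ultimately obtain y where "y \<in> S'" "(m, y) \<in> D" unfolding PP_def pa_def by auto
      then show False using mch S'A' A'A by auto
    qed
    define M0 where "M0 = PP S - {v, m}"
    define R where "R = A - PP S"
    have mPPS: "m \<in> PP S" using True unfolding PP_def by auto
    have "sg_derivable L ({v}, R, (M0 - (PP S' - {v})) \<union> (PP S' - {v}))"
      by (rule sg_wu[OF I1[folded A'_def, unfolded ost1]])
         (use PPS' PPSA mPPS in \<open>auto simp: R_def M0_def A'_def\<close>)
    moreover have "(M0 - (PP S' - {v})) \<union> (PP S' - {v}) = M0" unfolding M0_def using PPS' mPPS' by auto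
    ultimately have b1: "sg_derivable L (R, {v}, M0)" using sg_sym by metis
    have "PP S - {m} = {v} \<union> M0" unfolding M0_def using vS vm unfolding PP_def by auto
    then have b2: "sg_derivable L (R, {m}, {v} \<union> M0)" using sg_sym[OF I2[unfolded ost2]] unfolding R_def by simp
    have b3: "sg_derivable L (R, {v} \<union> {m}, M0)" using sg_contr[OF b1 b2] by simp
    have b4: "sg_derivable L (R, {v}, {m} \<union> M0)" by (rule sg_wu[OF b3]) auto
    have "{m} \<union> M0 = PP S - {v}" unfolding M0_def using mPPS vm by auto
    then show ?thesis unfolding ostA using sg_sym[OF b4] unfolding R_def by simp
  qed
qed

lemma all_olm:
  "m \<le> n \<Longrightarrow> A \<subseteq> {1..m} \<Longrightarrow> an D A = A \<Longrightarrow> v \<in> A \<Longrightarrow> (\<forall>c\<in>A. (v, c) \<notin> D)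
   \<Longrightarrow> sg_derivable (L_tilde n D B) (ostmt A v)"
proof (induction m arbitrary: A v)
  case 0
  then show ?case by auto
next
  case (Suc m)
  have IHm: "\<forall>A' u. A' \<subseteq> {1..Suc m - 1} \<longrightarrow> an D A' = A' \<longrightarrow> u \<in> A' \<longrightarrow> (\<forall>c\<in>A'. (u, c) \<notin> D)
               \<longrightarrow> sg_derivable (L_tilde n D B) (ostmt A' u)"
    using Suc.IH Suc.prems(1) by simp
  note c1 = case1[OF Suc.prems(1) IHm]
  show ?case
  proof (cases "Suc m \<in> A")
    case False
    then have "A \<subseteq> {1..m}" using Suc.prems(2) by (auto simp: le_Suc_eq)
    then show ?thesis using Suc.IH Suc.prems by simp
  next
    case True
    show ?thesis
    proof (cases "v = Suc m")
      case True
      show ?thesis unfolding True by (rule c1[OF Suc.prems(2,3) \<open>Suc m \<in> A\<close>])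
    next
      case False
      have I2: "sg_derivable (L_tilde n D B) (ostmt A (Suc m))" by (rule c1[OF Suc.prems(2,3) True])
      have A'anc: "an D (A - {Suc m}) = A - {Suc m}"
      proof
        show "A - {Suc m} \<subseteq> an D (A - {Suc m})" by (rule an_sup)
        show "an D (A - {Suc m}) \<subseteq> A - {Suc m}"
        proof
          fix u assume u: "u \<in> an D (A - {Suc m})"
          then obtain w where w: "w \<in> A - {Suc m}" "(u, w) \<in> D\<^sup>*" unfolding an_def by auto
          have "u \<in> A" using anc_elem[OF Suc.prems(3) w(2)] w(1) by auto
          moreover have "u \<noteq> Suc m" using w rt_le[OF w(2)] Suc.prems(2) by fastforce
          ultimately show "u \<in> A - {Suc m}" by auto
        qed
      qed
      have "A - {Suc m} \<subseteq> {1..m}" using Suc.prems(2) by (auto simp: le_Suc_eq)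
      have I1: "sg_derivable (L_tilde n D B) (ostmt (A - {Suc m}) v)"
      proof (rule Suc.IH)
        show "m \<le> n" using Suc.prems(1) by simp
        show "v \<in> A - {Suc m}" using Suc.prems(4) False by simp
        show "\<forall>c\<in>A - {Suc m}. (v, c) \<notin> D" using Suc.prems(5) by simp
      qed (use A'anc \<open>A - {Suc m} \<subseteq> {1..m}\<close> in auto)
      show ?thesis
        by (rule case2[OF Suc.prems(3,2,1) True Suc.prems(4) False Suc.prems(5) I1 I2])
    qed
  qed
qed

lemma ostmt_in: "A \<subseteq> {1..n} \<Longrightarrow> an D A = A \<Longrightarrow> v \<in> A \<Longrightarrow> (\<forall>c\<in>A. (v, c) \<notin> D)
  \<Longrightarrow> ostmt A v \<in> ordered_local_markov n D B"
  unfolding ostmt_def ordered_local_markov_def by blast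

lemma dir1: "t \<in> ordered_local_markov n D B \<Longrightarrow> sg_derivable (L_tilde n D B) t"
proof -
  assume "t \<in> ordered_local_markov n D B"
  then obtain A v where t: "t = ostmt A v" "A \<subseteq> {1..n}" "an D A = A" "v \<in> A" "\<forall>c\<in>A. (v, c) \<notin> D"
    unfolding ordered_local_markov_def ostmt_def by blast
  show ?thesis using all_olm[OF le_refl t(2-5)] t(1) by simp
qed

lemma dir2: "t \<in> L_tilde n D B \<Longrightarrow> sg_derivable (ordered_local_markov n D B) t"
proof -
  assume "t \<in> L_tilde n D B"
  then obtain i where i: "i \<in> {1..n}" "t \<in> L_tilde_i n D B i" unfolding L_tilde_def by blast
  from i(2) consider
      (a) "t = ({i}, {1..i-1} - mb D B i {1..i}, mb D B i {1..i})"
    | (b) H' Hs k where "t = assoc_indep D B Hs {k} H'" "power_parent n D B Hs k H'"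
    unfolding L_tilde_i_def by blast
  then show ?thesis
  proof cases
    case a
    have ianc: "an D {1..i} = {1..i}" using interval_anc i(1) by simp
    have "ostmt {1..i} i \<in> ordered_local_markov n D B"
      by (rule ostmt_in) (use i(1) ianc D_lt in \<open>auto dest: D_lt\<close>)
    moreover have "ostmt {1..i} i = t" unfolding a ostmt_def by auto
    ultimately show ?thesis using sg_derivable.base by metis
  next
    case b
    have hs: "is_head n D B Hs" and stp: "head_step D B Hs {k} H'"
      using b(2) unfolding power_parent_def by auto
    define j where "j = Max Hs"
    have finHs: "finite Hs" using head_fin[OF hs] .
    have Hsne: "Hs \<noteq> {}" and Hsn: "Hs \<subseteq> {1..n}" using hs unfolding is_head_def by auto
    have jHs: "j \<in> Hs" unfolding j_def using Max_in[OF finHs Hsne] .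
    have kHs: "k \<in> Hs" and kj: "k \<noteq> j" using stp unfolding head_step_def j_def by auto
    define A' where "A' = an D Hs - {k}"
    have A'anc: "an D A' = A'" unfolding A'_def by (rule barren_remove_anc[OF hs kHs])
    have anHs: "an D Hs \<subseteq> {1..n}" using an_interval[OF Hsn le_refl] .
    have A'n: "A' \<subseteq> {1..n}" unfolding A'_def using anHs by auto
    have jA': "j \<in> A'" unfolding A'_def using jHs kj an_sup by auto
    have jch: "\<forall>c\<in>A'. (j, c) \<notin> D"
    proof (intro ballI notI)
      fix c assume c: "c \<in> A'" "(j, c) \<in> D"
      then obtain h where h: "h \<in> Hs" "(c, h) \<in> D\<^sup>*" unfolding A'_def an_def by auto
      have "c \<le> h" using rt_le[OF h(2)] .
      moreover have "h \<le> j" unfolding j_def using Max_ge[OF finHs h(1)] .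
      moreover have "j < c" using D_lt[OF c(2)] .
      ultimately show False by simp
    qed
    have inO: "ostmt A' j \<in> ordered_local_markov n D B" by (rule ostmt_in[OF A'n A'anc jA' jch])
    define S2 where "S2 = dis_in B A' j"
    have ost: "ostmt A' j = ({j}, A' - PP S2, PP S2 - {j})" unfolding S2_def by (rule ostmt_eq[OF A'anc jA'])
    have H'eq: "H' = barren_in D A' S2" using stp unfolding head_step_def A'_def S2_def j_def by auto
    have H'T: "H' \<union> tail D B H' = PP S2"
      using head_of_dis(3)[OF A'anc A'n jA'] H'eq unfolding S2_def by simp
    have hdsub: "head_dis D B Hs \<subseteq> an D Hs"
      unfolding head_dis_def dis_set_def using dis_sub by blast
    have PPhd: "PP (head_dis D B Hs) \<subseteq> an D Hs" using PP_sub[OF an_an hdsub] .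
    have teq: "t = ({j}, PP (head_dis D B Hs) - (PP S2 \<union> {k}), PP S2 - {j})"
      using HT[of Hs] H'T unfolding b(1) assoc_indep_def j_def by simp
    have "sg_derivable (ordered_local_markov n D B) ({j}, A' - PP S2, PP S2 - {j})"
      using sg_derivable.base[OF inO] unfolding ost .
    moreover have "PP (head_dis D B Hs) - (PP S2 \<union> {k}) \<subseteq> A' - PP S2" unfolding A'_def using PPhd by auto
    ultimately show ?thesis unfolding teq by (rule sg_dec)
  qed
qed

end

theorem proposition4p9:
  assumes "is_MAG n D B"
    and "topological D"
  shows "(\<forall>t \<in> ordered_local_markov n D B. sg_derivable (L_tilde n D B) t) \<and>
         (\<forall>t \<in> L_tilde n D B. sg_derivable (ordered_local_markov n D B) t)"
proof -
  interpret mctx n D B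
    using assms unfolding is_MAG_def by unfold_locales auto
  show ?thesis using dir1 dir2 by blast
qed

end
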